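(* Let $\mathrm{SU}(2,1)$ denote the group of complex $3\times 3$ matrices of determinant $1$ preserving the Hermitian form $\langle z,w\rangle = z_1\overline{w_3}+z_2\overline{w_2}+z_3\overline{w_1}$ on $\mathbb{C}^3$. Let $\Gamma\subset \mathrm{SU}(2,1)$ be a subgroup, and let $\mathrm{Tr}(\Gamma)=\mathbb{Q}(\mathrm{Tr}(g) : g\in\Gamma)$. Suppose that $\Gamma$ contains a parabolic element and that $\Gamma$ is Zariski dense in $\mathrm{SU}(2,1)$. Then $\Gamma$ can be conjugated (within $\mathrm{SU}(2,1)$) to a subgroup of $\mathrm{SU}(2,1,\mathrm{Tr}(\Gamma))$, i.e. there exists $h\in\mathrm{SU}(2,1)$ such that every entry of every matrix in $h\Gamma h^{-1}$ lies in $\mathrm{Tr}(\Gamma)$.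
   Context: Complex hyperbolic plane $\mathbb{H}^2_{\mathbb{C}}$ is the image in $\mathbb{C}P^2$ of the vectors $z$ with $\langle z,z\rangle<0$, and its boundary $\partial\mathbb{H}^2_{\mathbb{C}}$ is the image of the nonzero vectors with $\langle z,z\rangle=0$; $\mathrm{SU}(2,1)$ acts on $\mathbb{H}^2_{\mathbb{C}}\cup\partial\mathbb{H}^2_{\mathbb{C}}$ projectively. An element of $\mathrm{SU}(2,1)$ is parabolic if its action fixes exactly one point of $\partial\mathbb{H}^2_{\mathbb{C}}$ and no point of $\mathbb{H}^2_{\mathbb{C}}$. For a field $K\subset\mathbb{C}$, $\mathrm{SU}(2,1,K)$ denotes the set of matrices in $\mathrm{SU}(2,1)$ with all entries in $K$. *)

theory Defs
  imports "HOL-Analysis.Analysis"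
begin

type_synonym cvec = "complex ^ 3"
type_synonym cmat = "complex ^ 3 ^ 3"

definition herm :: "cvec \<Rightarrow> cvec \<Rightarrow> complex" where
  "herm z w = z$1 * cnj (w$3) + z$2 * cnj (w$2) + z$3 * cnj (w$1)"

definition SU21 :: "cmat set" where
  "SU21 = {g. det g = 1 \<and> (\<forall>z w. herm (g *v z) (g *v w) = herm z w)}"

definition is_subgroup_SU21 :: "cmat set \<Rightarrow> bool" where
  "is_subgroup_SU21 G \<longleftrightarrow> G \<subseteq> SU21 \<and> mat 1 \<in> G
     \<and> (\<forall>a\<in>G. \<forall>b\<in>G. a ** b \<in> G) \<and> (\<forall>a\<in>G. matrix_inv a \<in> G)"

text \<open>Projective action: g fixes the point [z] (z nonzero) iff z is an eigenvector.\<close>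
definition fixes_pt :: "cmat \<Rightarrow> cvec \<Rightarrow> bool" where
  "fixes_pt g z \<longleftrightarrow> z \<noteq> 0 \<and> (\<exists>c. g *v z = c *s z)"

definition negative_vec :: "cvec \<Rightarrow> bool" where
  "negative_vec z \<longleftrightarrow> Re (herm z z) < 0 \<and> Im (herm z z) = 0"

definition null_vec :: "cvec \<Rightarrow> bool" where
  "null_vec z \<longleftrightarrow> z \<noteq> 0 \<and> herm z z = 0"

text \<open>Parabolic: fixes exactly one point of the boundary (a projective point,
  i.e. a complex line) and no point of complex hyperbolic space.\<close>
definition parabolic :: "cmat \<Rightarrow> bool" where
  "parabolic g \<longleftrightarrow> g \<in> SU21
     \<and> (\<nexists>z. negative_vec z \<and> fixes_pt g z)
     \<and> (\<exists>z. null_vec z \<and> fixes_pt g z)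
     \<and> (\<forall>z w. null_vec z \<and> fixes_pt g z \<and> null_vec w \<and> fixes_pt g w
              \<longrightarrow> (\<exists>c. w = c *s z))"

definition is_subfield :: "complex set \<Rightarrow> bool" where
  "is_subfield K \<longleftrightarrow> 0 \<in> K \<and> 1 \<in> K \<and> (\<forall>a\<in>K. \<forall>b\<in>K. a + b \<in> K \<and> a * b \<in> K)
     \<and> (\<forall>a\<in>K. - a \<in> K) \<and> (\<forall>a\<in>K. a \<noteq> 0 \<longrightarrow> inverse a \<in> K)"

definition trace_field :: "cmat set \<Rightarrow> complex set" where
  "trace_field G = \<Inter>{K. is_subfield K \<and> trace ` G \<subseteq> K}"

text \<open>Real polynomial functions of the real and imaginary parts of the entries
  (SU(2,1) is a real algebraic group).\<close>
inductive_set poly_fun :: "(cmat \<Rightarrow> real) set" where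
  const: "(\<lambda>_. c) \<in> poly_fun"
| re: "(\<lambda>g. Re (g $ i $ j)) \<in> poly_fun"
| im: "(\<lambda>g. Im (g $ i $ j)) \<in> poly_fun"
| add: "p \<in> poly_fun \<Longrightarrow> q \<in> poly_fun \<Longrightarrow> (\<lambda>g. p g + q g) \<in> poly_fun"
| mult: "p \<in> poly_fun \<Longrightarrow> q \<in> poly_fun \<Longrightarrow> (\<lambda>g. p g * q g) \<in> poly_fun"

definition zariski_dense_SU21 :: "cmat set \<Rightarrow> bool" where
  "zariski_dense_SU21 G \<longleftrightarrow>
     (\<forall>p\<in>poly_fun. (\<forall>g\<in>G. p g = 0) \<longrightarrow> (\<forall>g\<in>SU21. p g = 0))"

end

theory Submission
  imports Defs
begin

lemma sum3: "(\<Sum>i\<in>(UNIV::3 set). f i) = f 1 + f 2 + f 3"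
  by (rule sum_3)

definition rv :: "3 \<Rightarrow> 3" where "rv i = (if i = 1 then 3 else if i = 2 then 2 else 1)"

lemma rv_simps[simp]: "rv 1 = 3" "rv 2 = 2" "rv 3 = 1"
  by (auto simp: rv_def)

definition hadj :: "cmat \<Rightarrow> cmat" where
  "hadj M = (\<chi> i j. cnj (M $ rv j $ rv i))"

definition vec3 :: "complex \<Rightarrow> complex \<Rightarrow> complex \<Rightarrow> cvec" where
  "vec3 a b c = (\<chi> i. if i = 1 then a else if i = 2 then b else c)"

lemma vec3_nth[simp]: "vec3 a b c $ 1 = a" "vec3 a b c $ 2 = b" "vec3 a b c $ 3 = c"
  by (auto simp: vec3_def)

lemma vec_eq3: "(x::cvec) = y \<longleftrightarrow> x$1 = y$1 \<and> x$2 = y$2 \<and> x$3 = y$3"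
  by (auto simp: vec_eq_iff forall_3)

lemma mat_eq3: "(A::cmat) = B \<longleftrightarrow>
   A$1$1 = B$1$1 \<and> A$1$2 = B$1$2 \<and> A$1$3 = B$1$3 \<and>
   A$2$1 = B$2$1 \<and> A$2$2 = B$2$2 \<and> A$2$3 = B$2$3 \<and>
   A$3$1 = B$3$1 \<and> A$3$2 = B$3$2 \<and> A$3$3 = B$3$3"
  by (auto simp: vec_eq_iff forall_3)

lemma mv3: "((M::cmat) *v z) $ i = M$i$1 * z$1 + M$i$2 * z$2 + M$i$3 * z$3"
  by (simp add: matrix_vector_mult_def sum_3)

lemma mm3: "((A::cmat) ** B) $ i $ j = A$i$1 * B$1$j + A$i$2 * B$2$j + A$i$3 * B$3$j"
  by (simp add: matrix_matrix_mult_def sum_3)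

lemma hadj_nth[simp]: "hadj M $ i $ j = cnj (M $ rv j $ rv i)"
  by (simp add: hadj_def)

lemma herm_add_left: "herm (x + y) w = herm x w + herm y w"
  by (simp add: herm_def algebra_simps)
lemma herm_add_right: "herm w (x + y) = herm w x + herm w y"
  by (simp add: herm_def algebra_simps)
lemma herm_diff_left: "herm (x - y) w = herm x w - herm y w"
  by (simp add: herm_def algebra_simps)
lemma herm_diff_right: "herm w (x - y) = herm w x - herm w y"
  by (simp add: herm_def algebra_simps)
lemma herm_scale_left: "herm (c *s x) w = c * herm x w"
  by (simp add: herm_def algebra_simps)
lemma herm_scale_right: "herm w (c *s x) = cnj c * herm w x"
  by (simp add: herm_def algebra_simps)
lemma herm_sym: "herm w z = cnj (herm z w)"
  by (simp add: herm_def algebra_simps)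
lemma herm_zero_left[simp]: "herm 0 w = 0" and herm_zero_right[simp]: "herm w 0 = 0"
  by (simp_all add: herm_def)

lemmas herm_lin = herm_add_left herm_add_right herm_diff_left herm_diff_right herm_scale_left herm_scale_right

lemma herm_self_real: "herm z z = complex_of_real (Re (herm z z))"
  by (simp add: herm_def complex_eq_iff)

lemma herm_hadj: "herm (M *v z) w = herm z (hadj M *v w)"
  by (simp add: herm_def mv3 algebra_simps)

lemma hadj_hadj[simp]: "hadj (hadj M) = M"
  by (simp add: mat_eq3)

lemma herm_hadj': "herm z (M *v w) = herm (hadj M *v z) w"
  by (metis hadj_hadj herm_hadj)

lemma hadj_mult: "hadj (A ** B) = hadj B ** hadj A"
  by (simp add: mat_eq3 mm3 algebra_simps)

lemma hadj_one[simp]: "hadj (mat 1) = mat 1"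
  by (simp add: mat_eq3 mat_def)

lemma trace_hadj: "trace (hadj M) = cnj (trace M)"
  by (simp add: trace_def sum_3)

lemma det_hadj: "det (hadj M) = cnj (det M)"
  by (simp add: det_3 algebra_simps)

lemma herm_nondeg: assumes "\<And>z. herm z y = 0" shows "y = 0"
proof -
  have "herm (axis 1 1) y = 0" "herm (axis 2 1) y = 0" "herm (axis 3 1) y = 0" using assms by auto
  thus ?thesis by (simp add: herm_def axis_def vec_eq3)
qed

definition pres :: "cmat \<Rightarrow> bool" where
  "pres M \<longleftrightarrow> (\<forall>z w. herm (M *v z) (M *v w) = herm z w)"

lemma pres_iff: "pres M \<longleftrightarrow> hadj M ** M = mat 1"
proof
  assume "pres M"
  have "(hadj M ** M) *v w = mat 1 *v w" for w
  proof -
    have "herm z ((hadj M ** M) *v w - w) = 0" for z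
      using \<open>pres M\<close> unfolding pres_def
      by (simp add: herm_diff_right herm_hadj matrix_vector_mul_assoc[symmetric])
    hence "(hadj M ** M) *v w - w = 0" by (rule herm_nondeg)
    thus ?thesis by simp
  qed
  thus "hadj M ** M = mat 1" by (simp add: matrix_eq)
next
  assume "hadj M ** M = mat 1"
  thus "pres M" unfolding pres_def
    by (simp add: herm_hadj matrix_vector_mul_assoc)
qed

lemma matrix_inv_eq:
  fixes A B :: "'a::field^'n^'n"
  assumes "A ** B = mat 1" shows "matrix_inv A = B"
proof -
  have BA: "B ** A = mat 1" using assms matrix_left_right_inverse by blast
  have ex: "\<exists>A'. A ** A' = mat 1 \<and> A' ** A = mat 1" using assms BA by blast
  obtain A' where A': "A ** A' = mat 1" "A' ** A = mat 1" "matrix_inv A = A'"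
    using someI_ex[OF ex] unfolding matrix_inv_def by blast
  have "A' = A' ** (A ** B)" using assms by simp
  also have "\<dots> = B" by (simp add: matrix_mul_assoc A')
  finally show ?thesis using A' by simp
qed

lemma SU21_iff: "g \<in> SU21 \<longleftrightarrow> det g = 1 \<and> hadj g ** g = mat 1"
  using pres_iff unfolding SU21_def pres_def by auto

lemma SU21_inv: "g \<in> SU21 \<Longrightarrow> matrix_inv g = hadj g"
  by (metis SU21_iff matrix_inv_eq matrix_left_right_inverse)

lemma subfield_UNIV: "is_subfield UNIV" by (simp add: is_subfield_def)

lemma trace_field_subfield: "is_subfield (trace_field G)"
  unfolding trace_field_def is_subfield_def by blast

lemma trace_in_field: "g \<in> G \<Longrightarrow> trace g \<in> trace_field G"
  unfolding trace_field_def by blast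

lemma trace_field_least: "is_subfield K \<Longrightarrow> trace ` G \<subseteq> K \<Longrightarrow> trace_field G \<subseteq> K"
  unfolding trace_field_def by blast

context fixes K assumes K: "is_subfield K"
begin
lemma sf_add: "a \<in> K \<Longrightarrow> b \<in> K \<Longrightarrow> a + b \<in> K" using K by (simp add: is_subfield_def)
lemma sf_mult: "a \<in> K \<Longrightarrow> b \<in> K \<Longrightarrow> a * b \<in> K" using K by (simp add: is_subfield_def)
lemma sf_uminus: "a \<in> K \<Longrightarrow> - a \<in> K" using K by (simp add: is_subfield_def)
lemma sf_0: "0 \<in> K" using K by (simp add: is_subfield_def)
lemma sf_1: "1 \<in> K" using K by (simp add: is_subfield_def)
lemma sf_inverse: "a \<in> K \<Longrightarrow> inverse a \<in> K" using K sf_0 by (cases "a = 0") (auto simp: is_subfield_def)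
lemma sf_diff: "a \<in> K \<Longrightarrow> b \<in> K \<Longrightarrow> a - b \<in> K" using sf_add sf_uminus by (metis diff_conv_add_uminus)
lemma sf_divide: "a \<in> K \<Longrightarrow> b \<in> K \<Longrightarrow> a / b \<in> K" using sf_mult sf_inverse by (simp add: divide_inverse)
lemma sf_of_nat: "of_nat n \<in> K" by (induction n) (auto intro: sf_add sf_0 sf_1)
lemma sf_numeral: "numeral n \<in> K" using sf_of_nat[of "numeral n"] by simp
lemma sf_power: "a \<in> K \<Longrightarrow> a ^ n \<in> K" by (induction n) (auto intro: sf_mult sf_1)
lemmas sf_intros = sf_add sf_mult sf_uminus sf_0 sf_1 sf_inverse sf_diff sf_divide sf_of_nat sf_numeral sf_power
end

lemma subfield_cnj: "is_subfield K \<Longrightarrow> is_subfield {z. cnj z \<in> K}"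
  unfolding is_subfield_def by auto

context
  fixes \<Gamma> :: "cmat set"
  assumes sg: "is_subgroup_SU21 \<Gamma>"
begin

lemma G_SU: "g \<in> \<Gamma> \<Longrightarrow> g \<in> SU21" using sg by (auto simp: is_subgroup_SU21_def)
lemma G_mult: "a \<in> \<Gamma> \<Longrightarrow> b \<in> \<Gamma> \<Longrightarrow> a ** b \<in> \<Gamma>" using sg by (auto simp: is_subgroup_SU21_def)
lemma G_one: "mat 1 \<in> \<Gamma>" using sg by (auto simp: is_subgroup_SU21_def)
lemma G_hadj: "g \<in> \<Gamma> \<Longrightarrow> hadj g \<in> \<Gamma>"
  using sg SU21_inv G_SU by (auto simp: is_subgroup_SU21_def)
lemma G_pres: "g \<in> \<Gamma> \<Longrightarrow> hadj g ** g = mat 1" using G_SU SU21_iff by blast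
lemma G_pres': "g \<in> \<Gamma> \<Longrightarrow> herm (g *v z) (g *v w) = herm z w"
  using G_pres pres_iff unfolding pres_def by blast

lemma TF_cnj: "z \<in> trace_field \<Gamma> \<Longrightarrow> cnj z \<in> trace_field \<Gamma>"
proof -
  have "trace ` \<Gamma> \<subseteq> {z. cnj z \<in> trace_field \<Gamma>}"
  proof
    fix x assume "x \<in> trace ` \<Gamma>"
    then obtain g where g: "g \<in> \<Gamma>" "x = trace g" by auto
    have "trace (hadj g) \<in> trace_field \<Gamma>" using G_hadj g trace_in_field by blast
    thus "x \<in> {z. cnj z \<in> trace_field \<Gamma>}" using g by (simp add: trace_hadj)
  qed
  hence "trace_field \<Gamma> \<subseteq> {z. cnj z \<in> trace_field \<Gamma>}"
    by (intro trace_field_least subfield_cnj trace_field_subfield)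
  thus "z \<in> trace_field \<Gamma> \<Longrightarrow> cnj z \<in> trace_field \<Gamma>" by blast
qed

end

definition bil :: "cvec \<Rightarrow> cmat \<Rightarrow> cvec \<Rightarrow> complex" where
  "bil u g v = (\<Sum>i\<in>UNIV. \<Sum>j\<in>UNIV. u$i * g$i$j * v$j)"

lemma poly_sum: "finite S \<Longrightarrow> (\<And>x. x \<in> S \<Longrightarrow> f x \<in> poly_fun) \<Longrightarrow> (\<lambda>g. \<Sum>x\<in>S. f x g) \<in> poly_fun"
proof (induction S rule: finite_induct)
  case empty thus ?case using poly_fun.const[of 0] by simp
next
  case (insert x F)
  thus ?case using poly_fun.add[of "f x" "\<lambda>g. \<Sum>x\<in>F. f x g"] by simp
qed

lemma poly_term_re: "(\<lambda>g. Re (c * g$i$j)) \<in> poly_fun"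
proof -
  have "(\<lambda>g. Re (c * g$i$j)) = (\<lambda>g. (\<lambda>_. Re c) g * (\<lambda>g. Re (g$i$j)) g + (\<lambda>_. - Im c) g * (\<lambda>g. Im (g$i$j)) g)"
    by auto
  also have "\<dots> \<in> poly_fun" by (intro poly_fun.intros)
  finally show ?thesis .
qed

lemma poly_term_im: "(\<lambda>g. Im (c * g$i$j)) \<in> poly_fun"
proof -
  have "(\<lambda>g. Im (c * g$i$j)) = (\<lambda>g. (\<lambda>_. Re c) g * (\<lambda>g. Im (g$i$j)) g + (\<lambda>_. Im c) g * (\<lambda>g. Re (g$i$j)) g)"
    by auto
  also have "\<dots> \<in> poly_fun" by (intro poly_fun.intros)
  finally show ?thesis .
qed

lemma bil_alt: "bil u g v = (\<Sum>i\<in>UNIV. \<Sum>j\<in>UNIV. (u$i * v$j) * g$i$j)"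
  unfolding bil_def by (simp add: algebra_simps)

lemma poly_bil_re: "(\<lambda>g. Re (bil u g v)) \<in> poly_fun"
proof -
  have "(\<lambda>g. Re (bil u g v)) = (\<lambda>g. \<Sum>i\<in>UNIV. (\<lambda>i g. \<Sum>j\<in>UNIV. (\<lambda>j g. Re ((u$i * v$j) * g$i$j)) j g) i g)"
    by (simp add: bil_alt Re_sum)
  also have "\<dots> \<in> poly_fun"
    by (intro poly_sum poly_term_re) simp_all
  finally show ?thesis .
qed

lemma poly_bil_im: "(\<lambda>g. Im (bil u g v)) \<in> poly_fun"
proof -
  have "(\<lambda>g. Im (bil u g v)) = (\<lambda>g. \<Sum>i\<in>UNIV. (\<lambda>i g. \<Sum>j\<in>UNIV. (\<lambda>j g. Im ((u$i * v$j) * g$i$j)) j g) i g)"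
    by (simp add: bil_alt Im_sum)
  also have "\<dots> \<in> poly_fun"
    by (intro poly_sum poly_term_im) simp_all
  finally show ?thesis .
qed

lemma zariski_bil:
  assumes "zariski_dense_SU21 G" "\<forall>g\<in>G. bil u g v = 0" "g \<in> SU21"
  shows "bil u g v = 0"
proof -
  have "Re (bil u g v) = 0"
    using assms poly_bil_re[of u v] unfolding zariski_dense_SU21_def by force
  moreover have "Im (bil u g v) = 0"
    using assms poly_bil_im[of u v] unfolding zariski_dense_SU21_def by force
  ultimately show ?thesis by (simp add: complex_eq_iff)
qed

definition m3 :: "complex \<Rightarrow> complex \<Rightarrow> complex \<Rightarrow> complex \<Rightarrow> complex \<Rightarrow> complex \<Rightarrow> complex \<Rightarrow> complex \<Rightarrow> complex \<Rightarrow> cmat" where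
  "m3 a b c d e f g h k = (\<chi> i. if i = 1 then vec3 a b c else if i = 2 then vec3 d e f else vec3 g h k)"

lemma m3_nth[simp]:
  "m3 a b c d e f g h k $ 1 = vec3 a b c"
  "m3 a b c d e f g h k $ 2 = vec3 d e f"
  "m3 a b c d e f g h k $ 3 = vec3 g h k"
  by (auto simp: m3_def)

lemma SU21_m3: "det M = 1 \<Longrightarrow> hadj M ** M = mat 1 \<Longrightarrow> M \<in> SU21"
  using SU21_iff by blast

lemma mat1_nth: "(mat 1 :: cmat) $ i $ j = (if i = j then 1 else 0)"
  by (simp add: mat_def)

lemma el_D: "r \<noteq> 0 \<Longrightarrow> cnj r = r \<Longrightarrow> m3 r 0 0 0 1 0 0 0 (1/r) \<in> SU21"
  by (intro SU21_m3) (auto simp: det_3 mat_eq3 mm3 mat1_nth)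

lemma el_J: "m3 0 0 (-1) 0 (-1) 0 (-1) 0 0 \<in> SU21"
  by (intro SU21_m3) (auto simp: det_3 mat_eq3 mm3 mat1_nth)

lemma el_V: "m3 1 0 \<i> 0 1 0 0 0 1 \<in> SU21"
  by (intro SU21_m3) (auto simp: det_3 mat_eq3 mm3 mat1_nth)

lemma el_T1: "m3 1 (-1) (-1/2) 0 1 1 0 0 1 \<in> SU21"
  by (intro SU21_m3) (auto simp: det_3 mat_eq3 mm3 mat1_nth)

lemma el_Ti: "m3 1 \<i> (-1/2) 0 1 \<i> 0 0 1 \<in> SU21"
  by (intro SU21_m3) (auto simp: det_3 mat_eq3 mm3 mat1_nth)

lemma el_L1: "m3 1 0 0 1 1 0 (-1/2) (-1) 1 \<in> SU21"
  by (intro SU21_m3) (auto simp: det_3 mat_eq3 mm3 mat1_nth)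

lemma el_Li: "m3 1 0 0 \<i> 1 0 (-1/2) \<i> 1 \<in> SU21"
  by (intro SU21_m3) (auto simp: det_3 mat_eq3 mm3 mat1_nth)

lemma el_I: "m3 1 0 0 0 1 0 0 0 1 \<in> SU21"
  by (intro SU21_m3) (auto simp: det_3 mat_eq3 mm3 mat1_nth)

lemma bil_m3: "bil u (m3 a b c d e f g h k) v =
   u$1 * (a * v$1 + b * v$2 + c * v$3) + u$2 * (d * v$1 + e * v$2 + f * v$3) + u$3 * (g * v$1 + h * v$2 + k * v$3)"
  by (simp add: bil_def sum_3 algebra_simps)

lemma bil_SU21_zero:
  assumes "\<forall>g\<in>SU21. bil u g v = 0"
  shows "u = 0 \<or> v = 0"
proof -
  define p where "p i j = u$i * v$j" for i j
  have eI: "p 1 1 + p 2 2 + p 3 3 = 0" using assms el_I by (force simp: bil_m3 p_def algebra_simps)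
  have eD2: "2 * p 1 1 + p 2 2 + p 3 3 / 2 = 0"
    using assms el_D[of 2] by (force simp: bil_m3 p_def algebra_simps)
  have eD3: "p 1 1 / 2 + p 2 2 + 2 * p 3 3 = 0"
    using assms el_D[of "1/2"] by (force simp: bil_m3 p_def algebra_simps)
  have "bil u (m3 0 0 (-1) 0 (-1) 0 (-1) 0 0) v = 0" using assms el_J by blast
  hence eJ: "p 1 3 + p 2 2 + p 3 1 = 0" unfolding bil_m3 p_def by (simp add: algebra_simps) (metis add.assoc neg_eq_iff_add_eq_0)
  have eV: "p 1 1 + p 2 2 + p 3 3 + \<i> * p 1 3 = 0" using assms el_V by (force simp: bil_m3 p_def algebra_simps)
  have eT1: "p 1 1 + p 2 2 + p 3 3 - p 1 2 - p 1 3 / 2 + p 2 3 = 0" using assms el_T1 by (force simp: bil_m3 p_def algebra_simps)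
  have eTi: "p 1 1 + p 2 2 + p 3 3 + \<i> * p 1 2 - p 1 3 / 2 + \<i> * p 2 3 = 0" using assms el_Ti by (force simp: bil_m3 p_def algebra_simps)
  have eL1: "p 1 1 + p 2 2 + p 3 3 + p 2 1 - p 3 1 / 2 - p 3 2 = 0" using assms el_L1 by (force simp: bil_m3 p_def algebra_simps)
  have eLi: "p 1 1 + p 2 2 + p 3 3 + \<i> * p 2 1 - p 3 1 / 2 + \<i> * p 3 2 = 0" using assms el_Li by (force simp: bil_m3 p_def algebra_simps)
  have b: "p 2 2 = - p 1 1 - p 3 3" using eI by (metis add.commute add_diff_cancel_left' diff_minus_eq_add minus_diff_eq neg_eq_iff_add_eq_0)
  have e2: "4 * p 1 1 + 2 * p 2 2 + p 3 3 = 0" using eD2 by (simp add: field_simps)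
  have e3: "p 1 1 + 2 * p 2 2 + 4 * p 3 3 = 0" using eD3 by (simp add: field_simps)
  have c: "p 3 3 = 2 * p 1 1" using e2 b by algebra
  have "p 1 1 = 0" using e3 b c by algebra
  hence d1: "p 1 1 = 0" "p 2 2 = 0" "p 3 3 = 0" using b c by auto
  have d2: "p 1 3 = 0" "p 3 1 = 0" using eJ eV d1 by auto
  have x1: "p 2 3 = p 1 2" using eT1 d1 d2 by (simp add: algebra_simps)
  have "\<i> * p 1 2 + \<i> * p 2 3 = 0" using eTi d1 d2 by simp
  hence "p 1 2 = 0" using x1 by simp
  hence d3: "p 1 2 = 0" "p 2 3 = 0" using x1 by auto
  have x2: "p 3 2 = p 2 1" using eL1 d1 d2 by (simp add: algebra_simps)
  have "\<i> * p 2 1 + \<i> * p 3 2 = 0" using eLi d1 d2 by simp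
  hence "p 2 1 = 0" using x2 by simp
  hence d4: "p 2 1 = 0" "p 3 2 = 0" using x2 by auto
  have "\<forall>i j. u$i * v$j = 0" using d1 d2 d3 d4 unfolding p_def by (auto simp: forall_3)
  thus ?thesis by (metis vec_eq3 zero_index mult_eq_0_iff)
qed

lemma zar:
  assumes sg: "is_subgroup_SU21 \<Gamma>" and zd: "zariski_dense_SU21 \<Gamma>" and "u \<noteq> 0" "v \<noteq> 0"
  shows "\<exists>g\<in>\<Gamma>. bil u g v \<noteq> 0"
  using zariski_bil[OF zd] bil_SU21_zero assms by blast

lemma herm_bil: "herm (g *v v) w = bil (\<chi> i. cnj (w $ rv i)) g w' " if "w' = v" for w'
  using that by (simp add: herm_def bil_def sum_3 mv3 algebra_simps)

definition cols3 :: "cvec \<Rightarrow> cvec \<Rightarrow> cvec \<Rightarrow> cmat" where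
  "cols3 a b c = (\<chi> i j. if j = 1 then a$i else if j = 2 then b$i else c$i)"

lemma cols3_nth[simp]: "cols3 a b c $ i $ 1 = a$i" "cols3 a b c $ i $ 2 = b$i" "cols3 a b c $ i $ 3 = c$i"
  by (auto simp: cols3_def)

lemma cols3_e: "cols3 a b c *v axis 1 1 = a" "cols3 a b c *v axis 2 1 = b" "cols3 a b c *v axis 3 1 = c"
  by (auto simp: vec_eq3 mv3 axis_def)

definition cof :: "cvec \<Rightarrow> cvec \<Rightarrow> cvec" where
  "cof a b = vec3 (b$2*a$3 - a$2*b$3) (a$1*b$3 - b$1*a$3) (b$1*a$2 - a$1*b$2)"

lemma det_cols_bil: "det (cols3 a (g *v v) b) = bil (cof a b) g v"
  by (simp add: det_3 bil_def cof_def sum_3 mv3 algebra_simps)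

lemma cof_nonzero:
  assumes "herm a a = 0" "herm b a \<noteq> 0"
  shows "cof a b \<noteq> 0"
proof
  assume c: "cof a b = 0"
  hence e: "b$2*a$3 = a$2*b$3" "a$1*b$3 = b$1*a$3" "b$1*a$2 = a$1*b$2"
    by (auto simp: cof_def vec_eq3)
  have "a \<noteq> 0" using assms by auto
  then obtain k where k: "a$k \<noteq> 0" by (auto simp: vec_eq3)
  have "b = (b$k / a$k) *s a"
  proof -
    have "k = 1 \<or> k = 2 \<or> k = 3" using exhaust_3 by blast
    thus ?thesis using k e by (auto simp: vec_eq3 field_simps)
  qed
  hence "herm b a = (b$k / a$k) * herm a a" by (metis herm_scale_left)
  thus False using assms by simp
qed

definition cmul :: "complex \<Rightarrow> cmat \<Rightarrow> cmat" where
  "cmul k M = (\<chi> i j. k * M$i$j)"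

lemma cmul_nth[simp]: "cmul k M $ i $ j = k * M$i$j" by (simp add: cmul_def)

lemma cmul_mult_left: "cmul k A ** B = cmul k (A ** B)"
  by (simp add: mat_eq3 mm3 algebra_simps)
lemma cmul_mult_right: "A ** cmul k B = cmul k (A ** B)"
  by (simp add: mat_eq3 mm3 algebra_simps)
lemma cmul_cmul: "cmul a (cmul b A) = cmul (a*b) A"
  by (simp add: mat_eq3)
lemma cmul_one: "cmul 1 A = A" by (simp add: mat_eq3)
lemma hadj_cmul: "hadj (cmul k A) = cmul (cnj k) (hadj A)" by (simp add: mat_eq3)
lemma det_cmul: "det (cmul k A) = k^3 * det A" by (simp add: det_3 algebra_simps power3_eq_cube)
lemma cmul_mat: "cmul k (mat a) = mat (k * a)" by (simp add: mat_eq3 mat_def)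
lemma cmul_mv: "cmul k A *v x = k *s (A *v x)" by (simp add: vec_eq3 mv3 algebra_simps)

definition col :: "cmat \<Rightarrow> 3 \<Rightarrow> cvec" where "col M j = (\<chi> i. M$i$j)"
lemma col_nth[simp]: "col M j $ i = M $ i $ j" by (simp add: col_def)
lemma col_cols3[simp]: "col (cols3 a b c) 1 = a" "col (cols3 a b c) 2 = b" "col (cols3 a b c) 3 = c"
  by (auto simp: vec_eq3)

lemma gram_nth: "(hadj M ** M) $ i $ j = herm (col M j) (col M (rv i))"
  using exhaust_3[of i] by (auto simp add: mm3 herm_def algebra_simps)

lemma hadj_mv_nth: "(hadj F *v y) $ i = herm y (col F (rv i))"
  using exhaust_3[of i] by (auto simp add: herm_def mv3 algebra_simps)

lemma det_mat3: "det (mat d :: cmat) = d^3"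
  by (simp add: det_3 mat_def power3_eq_cube)

lemma herm_real_cnj: "cnj (herm z z) = herm z z"
  by (simp add: herm_def algebra_simps)

lemma frame:
  fixes v w x :: cvec
  assumes nv: "herm v v = 0" and nw: "herm w w = 0" and a0: "herm v w \<noteq> 0"
    and D0: "det (cols3 v x w) \<noteq> 0"
  defines "\<alpha> \<equiv> herm x w / herm v w" and "\<beta> \<equiv> herm x v / herm w v"
  defines "f2 \<equiv> x - \<alpha> *s v - \<beta> *s w"
  defines "d \<equiv> herm f2 f2"
  defines "\<kappa> \<equiv> d / herm v w"
  defines "F \<equiv> cols3 (\<kappa> *s v) f2 w"
  shows "hadj F ** F = mat d" "F ** cmul (1/d) (hadj F) = mat 1" "cmul (1/d) (hadj F) ** F = mat 1"
    "Re d > 0" "d = complex_of_real (Re d)" "\<kappa> \<noteq> 0"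
    "herm f2 w = 0" "herm f2 v = 0"
proof -
  define a where "a = herm v w"
  have a': "herm w v = cnj a" using herm_sym a_def by metis
  have a'0: "herm w v \<noteq> 0" using a0 a' a_def by simp
  show o1: "herm f2 w = 0" unfolding f2_def \<alpha>_def \<beta>_def using a0 a'0
    by (simp add: herm_lin nw)
  show o2: "herm f2 v = 0" unfolding f2_def \<alpha>_def \<beta>_def using a0 a'0
    by (simp add: herm_lin nv)
  have o1': "herm w f2 = 0" "herm v f2 = 0" using o1 o2 herm_sym by (metis complex_cnj_zero)+
  define F0 where "F0 = cols3 v f2 w"
  have G0: "hadj F0 ** F0 = m3 a 0 0 0 d 0 0 0 (cnj a)"
    unfolding mat_eq3 gram_nth F0_def using o1 o2 o1' nv nw a' by (simp add: a_def d_def)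
  have dF0: "det F0 = det (cols3 v x w)"
    unfolding F0_def f2_def by (simp add: det_3 algebra_simps)
  have "det (hadj F0 ** F0) = cnj (det F0) * det F0" by (simp add: det_mul det_hadj)
  hence eq: "a * d * cnj a = cnj (det F0) * det F0" unfolding G0 by (simp add: det_3)
  have dr: "cnj d = d" unfolding d_def by (rule herm_real_cnj)
  show dre: "d = complex_of_real (Re d)" using dr by (simp add: complex_eq_iff)
  have "d = (cnj (det F0) * det F0) / (a * cnj a)" using eq a0 a_def by (simp add: field_simps)
  hence "d = complex_of_real ((cmod (det F0))^2 / (cmod a)^2)"
    by (simp only: of_real_divide complex_norm_square mult.commute)
  moreover have "(cmod (det F0))^2 / (cmod a)^2 > 0" using D0 dF0 a0 a_def by simp
  ultimately show dpos: "Re d > 0" by simp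
  have d0: "d \<noteq> 0" using dpos by auto
  show "\<kappa> \<noteq> 0" unfolding \<kappa>_def using d0 a0 by simp
  have ka: "\<kappa> * a = d" unfolding \<kappa>_def a_def using a0 by simp
  show G: "hadj F ** F = mat d"
    unfolding mat_eq3 gram_nth F_def using o1 o2 o1' nv nw a' ka dr
    by (simp add: herm_lin mat_def a_def d_def) (metis complex_cnj_cnj complex_cnj_mult)
  have L: "cmul (1/d) (hadj F) ** F = mat 1"
    using G d0 by (simp add: cmul_mult_left cmul_mat)
  thus "cmul (1/d) (hadj F) ** F = mat 1" .
  thus "F ** cmul (1/d) (hadj F) = mat 1" using matrix_left_right_inverse by blast
qed

lemma pres_herm: "hadj P ** P = mat 1 \<Longrightarrow> herm (P *v z) (P *v w) = herm z w"
  using pres_iff unfolding pres_def by blast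

lemma para_analysis:
  assumes pr: "hadj P ** P = mat 1" and dt: "det P = 1"
    and e1: "P$1$1 = l" "P$2$1 = 0" "P$3$1 = 0"
    and noneg: "\<not> (\<exists>y. negative_vec y \<and> fixes_pt P y)"
    and uniq: "\<forall>y. null_vec y \<and> fixes_pt P y \<longrightarrow> y$2 = 0 \<and> y$3 = 0"
  shows "\<exists>a0 a1 a2 e. e \<noteq> 0 \<and>
     (\<forall>K. is_subfield K \<longrightarrow> trace P \<in> K \<longrightarrow> cnj (trace P) \<in> K \<longrightarrow> a0 \<in> K \<and> a1 \<in> K \<and> a2 \<in> K) \<and>
     mat a0 + cmul a1 P + cmul a2 (P ** P) = m3 0 0 e 0 0 0 0 0 0"
proof -
  define a where "a = P$1$2"
  define b where "b = P$1$3"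
  define \<nu> where "\<nu> = P$2$2"
  define c where "c = P$2$3"
  define \<mu> where "\<mu> = P$3$3"
  have pr': "(hadj P ** P) $ i $ j = mat 1 $ i $ j" for i j using pr by simp
  have q1: "cnj l * P$3$2 = 0" using pr'[of 3 2] e1 by (simp add: mm3 mat_def)
  have q2: "cnj \<mu> * l = 1" using pr'[of 1 1] e1 by (simp add: mm3 mat_def \<mu>_def)
  have lam0: "l \<noteq> 0" using q2 by auto
  have P32: "P$3$2 = 0" using q1 lam0 by simp
  have q3: "cnj \<nu> * \<nu> = 1" using pr'[of 2 2] e1 P32 by (simp add: mm3 mat_def \<nu>_def)
  have q4: "cnj \<mu> * a + cnj c * \<nu> = 0" using pr'[of 1 2] e1 P32 by (simp add: mm3 mat_def \<mu>_def a_def c_def \<nu>_def)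
  have dt': "l * \<nu> * \<mu> = 1" using dt e1 P32 by (simp add: det_3 \<mu>_def \<nu>_def)
  have Pm: "P = m3 l a b 0 \<nu> c 0 0 \<mu>" using e1 P32 by (simp add: mat_eq3 a_def b_def c_def \<nu>_def \<mu>_def)
  have Pv: "P *v vec3 x y z = vec3 (l*x + a*y + b*z) (\<nu>*y + c*z) (\<mu>*z)" for x y z
    by (subst Pm) (simp add: vec_eq3 mv3)
  have hv: "herm (vec3 x y z) (vec3 x y z) = x * cnj z + y * cnj y + z * cnj x" for x y z
    by (simp add: herm_def)
  have nu0: "\<nu> \<noteq> 0" using q3 by auto
  have mu0: "\<mu> \<noteq> 0" using q2 by auto
  have unit: "l * cnj l = 1"
  proof (rule ccontr)
    assume nu: "l * cnj l \<noteq> 1"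
    have "cnj (cnj \<mu> * l) = 1" using q2 by simp
    hence "\<mu> * cnj l = 1" by simp
    hence mu: "\<mu> = 1 / cnj l" using lam0 by (simp add: field_simps)
    have "\<mu> * cnj \<mu> = 1 / (l * cnj l)" by (simp add: mu)
    hence mm: "\<mu> * cnj \<mu> \<noteq> 1" using nu by (metis divide_eq_1_iff)
    have nm: "\<nu> \<noteq> \<mu>" using mm q3 by (auto simp: mult.commute)
    have lm: "l \<noteq> \<mu>" using nu q2 by (metis complex_cnj_cnj complex_cnj_mult complex_cnj_one mult.commute)
    define y2 where "y2 = - c / (\<nu> - \<mu>)"
    define y1 where "y1 = - (a * y2 + b) / (l - \<mu>)"
    define y where "y = vec3 y1 y2 1"
    have h1: "y2 * (\<nu> - \<mu>) = - c" using nm by (simp add: y2_def)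
    have h2: "y1 * (l - \<mu>) = - (a * y2 + b)" using lm by (simp add: y1_def)
    have Py: "P *v y = \<mu> *s y"
      unfolding y_def Pv using h1 h2 by (simp add: vec_eq3) (intro conjI; algebra)
    have "herm y y = herm (P *v y) (P *v y)" using pres_herm[OF pr] by simp
    also have "\<dots> = (\<mu> * cnj \<mu>) * herm y y" unfolding Py by (simp add: herm_lin)
    finally have "herm y y = 0" using mm by (metis mult_cancel_right1)
    moreover have "y \<noteq> 0" by (simp add: y_def vec_eq3)
    ultimately have "null_vec y \<and> fixes_pt P y" using Py by (auto simp: null_vec_def fixes_pt_def)
    hence "y$3 = 0" using uniq by blast
    thus False by (simp add: y_def)
  qed
  have mul: "\<mu> = l" using q2 unit lam0
    by (metis complex_cnj_cnj complex_cnj_mult complex_cnj_one mult.commute mult_left_cancel)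
  have cl: "cnj l = 1 / l" using unit lam0 by (simp add: field_simps)
  have nul: "\<nu> = 1 / l^2" using dt' mul lam0 by (simp add: field_simps power2_eq_square)
  have tr: "trace P = 2*l + \<nu>" using Pm mul by (simp add: trace_def sum_3)
  have ctr: "cnj (trace P) = 2/l + l^2" using tr cl nul by (simp add: field_simps)
  have PP: "P ** P = m3 (l^2) (l*a + a*\<nu>) (l*b + a*c + b*\<mu>) 0 (\<nu>^2) (\<nu>*c + c*\<mu>) 0 0 (\<mu>^2)"
    by (subst (1 2) Pm) (simp add: mat_eq3 mm3 power2_eq_square)
  have Pneg: "False" if "P *v vec3 y1 y2 1 = l *s vec3 y1 y2 1" "Re (y1 + cnj y1 + y2 * cnj y2) < 0"
    "Im (y1 + cnj y1 + y2 * cnj y2) = 0" for y1 y2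
  proof -
    have "negative_vec (vec3 y1 y2 1)" using that(2,3) by (simp add: negative_vec_def hv algebra_simps)
    moreover have "fixes_pt P (vec3 y1 y2 1)" using that(1) by (auto simp: fixes_pt_def vec_eq3)
    ultimately show False using noneg by blast
  qed
  show ?thesis
  proof (cases "\<nu> = l")
    case False
    define e where "e = a*c + b*(l - \<nu>)"
    have e0: "e \<noteq> 0"
    proof
      assume "e = 0"
      define x2 where "x2 = c / (l - \<nu>)"
      define y1 where "y1 = - complex_of_real (1 + (cmod x2)^2)"
      have "P *v vec3 y1 x2 1 = l *s vec3 y1 x2 1"
        unfolding Pv using False \<open>e = 0\<close> mul
        by (simp add: vec_eq3 x2_def e_def field_simps; simp add: algebra_simps)
      moreover have "x2 * cnj x2 = complex_of_real ((cmod x2)^2)" by (simp only: complex_norm_square)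
      ultimately show False using Pneg[of y1 x2] by (simp add: y1_def; smt (verit) zero_le_power2)
    qed
    have l3: "l^3 \<noteq> 1" using False nul lam0 by (auto simp: field_simps power2_eq_square power3_eq_cube)
    define t where "t = trace P"
    have den: "6 * cnj t - 2 * t^2 = -2 * (l^3 - 1)^2 / l^4"
      unfolding t_def ctr unfolding tr nul using lam0 by (simp add: field_simps power2_eq_square power3_eq_cube; algebra)
    have den0: "6 * cnj t - 2 * t^2 \<noteq> 0" unfolding den using l3 lam0 by simp
    have "l * (6 * cnj t - 2 * t^2) = 9 - t * cnj t"
      unfolding t_def ctr unfolding tr nul using lam0 by (simp add: field_simps power2_eq_square power3_eq_cube; algebra)
    hence lamf: "l = (9 - t * cnj t) / (6 * cnj t - 2 * t^2)" using den0 by (simp add: eq_divide_eq)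
    show ?thesis
    proof (intro exI conjI allI impI)
      show "e \<noteq> 0" by (rule e0)
      fix K assume K: "is_subfield K" "trace P \<in> K" "cnj (trace P) \<in> K"
      have lK: "l \<in> K" using K unfolding lamf t_def by (intro sf_intros)
      show "l * \<nu> \<in> K" using lK K unfolding nul by (intro sf_intros)
      show "- (l + \<nu>) \<in> K" using lK K unfolding nul by (intro sf_intros)
      show "1 \<in> K" using K by (intro sf_intros)
    next
      show "mat (l * \<nu>) + cmul (- (l + \<nu>)) P + cmul 1 (P ** P) = m3 0 0 e 0 0 0 0 0 0"
        unfolding PP by (subst Pm) (simp add: mat_eq3 mat_def e_def mul algebra_simps power2_eq_square)
    qed
  next
    case True
    have tl: "l = trace P / 3" using tr True by simp
    show ?thesis
    proof (cases "a * c = 0")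
      case False
      show ?thesis
      proof (intro exI conjI allI impI)
        show "a * c \<noteq> 0" by (rule False)
        fix K assume K: "is_subfield K" "trace P \<in> K" "cnj (trace P) \<in> K"
        have lK: "l \<in> K" using K unfolding tl by (intro sf_intros)
        show "l^2 \<in> K" using lK K by (intro sf_intros)
        show "- (2*l) \<in> K" using lK K by (intro sf_intros)
        show "1 \<in> K" using lK K by (intro sf_intros)
      next
        show "mat (l^2) + cmul (- (2*l)) P + cmul 1 (P ** P) = m3 0 0 (a*c) 0 0 0 0 0 0"
          unfolding PP by (subst Pm) (simp add: mat_eq3 mat_def True mul algebra_simps power2_eq_square)
      qed
    next
      case ac: True
      have a0: "a = 0 \<and> c = 0"
      proof (cases "a = 0")
        case True thus ?thesis using q4 nu0 by simp
      next
        case False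
        hence "c = 0" using ac by simp
        thus ?thesis using q4 mu0 by simp
      qed
      have b0: "b \<noteq> 0"
      proof
        assume "b = 0"
        have "P *v vec3 (-1) 0 1 = l *s vec3 (-1) 0 1"
          unfolding Pv using a0 \<open>b = 0\<close> mul by (simp add: vec_eq3)
        thus False using Pneg[of "-1" 0] by simp
      qed
      show ?thesis
      proof (intro exI conjI allI impI)
        show "b \<noteq> 0" by (rule b0)
        fix K assume K: "is_subfield K" "trace P \<in> K" "cnj (trace P) \<in> K"
        have lK: "l \<in> K" using K unfolding tl by (intro sf_intros)
        show "- l \<in> K" using lK K by (intro sf_intros)
        show "1 \<in> K" using lK K by (intro sf_intros)
        show "0 \<in> K" using lK K by (intro sf_intros)
      next
        show "mat (- l) + cmul 1 P + cmul 0 (P ** P) = m3 0 0 b 0 0 0 0 0 0"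
          by (subst Pm) (simp add: mat_eq3 mat_def a0 True mul)
      qed
    qed
  qed
qed

lemma col_mult: "col (A ** B) j = A *v col B j"
  by (simp add: vec_eq3 mm3 mv3)

lemma col_mv1: "M *v vec3 1 0 0 = col M 1"
  by (simp add: vec_eq3 mv3)

lemma mv_scale: "(M::cmat) *v (c *s x) = c *s (M *v x)"
  by (simp add: vec_eq3 mv3 algebra_simps)

lemma trace_cmul: "trace (cmul a M) = a * trace M"
  by (simp add: trace_def sum_3 algebra_simps)

lemma mat_cmul: "mat a = cmul a (mat 1 :: cmat)"
  by (simp add: mat_eq3 mat_def)

lemma mat_add_rdistrib: "((A::cmat) + B) ** C = A ** C + B ** C"
  by (simp add: vec_eq_iff matrix_matrix_mult_def sum.distrib algebra_simps)

lemma trace_E: "trace (m3 0 0 e 0 0 0 0 0 0 ** M) = e * M$3$1"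
  by (simp add: trace_def sum_3 mm3)

context
  fixes \<Gamma> :: "cmat set"
  assumes sg: "is_subgroup_SU21 \<Gamma>" and zd: "zariski_dense_SU21 \<Gamma>"
begin

lemma get_frame:
  assumes nv: "null_vec v"
  obtains \<gamma> \<delta> where "\<gamma> \<in> \<Gamma>" "\<delta> \<in> \<Gamma>" "herm v v = 0" "herm (\<gamma> *v v) (\<gamma> *v v) = 0"
    "herm v (\<gamma> *v v) \<noteq> 0" "det (cols3 v (\<delta> *v v) (\<gamma> *v v)) \<noteq> 0"
proof -
  have v0: "v \<noteq> 0" and vv: "herm v v = 0" using nv by (auto simp: null_vec_def)
  have "(\<chi> i. cnj (v $ rv i)) \<noteq> 0" using v0 by (auto simp: vec_eq3)
  then obtain \<gamma> where g: "\<gamma> \<in> \<Gamma>" "bil (\<chi> i. cnj (v $ rv i)) \<gamma> v \<noteq> 0"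
    using zar[OF sg zd] v0 by blast
  have h1: "herm (\<gamma> *v v) v \<noteq> 0" using g herm_bil[where g=\<gamma> and v=v and w=v] by simp
  hence h1': "herm v (\<gamma> *v v) \<noteq> 0" by (metis complex_cnj_zero herm_sym)
  have nw: "herm (\<gamma> *v v) (\<gamma> *v v) = 0" using G_pres'[OF sg g(1)] vv by simp
  have "cof v (\<gamma> *v v) \<noteq> 0" using cof_nonzero vv h1 by blast
  then obtain \<delta> where d: "\<delta> \<in> \<Gamma>" "bil (cof v (\<gamma> *v v)) \<delta> v \<noteq> 0"
    using zar[OF sg zd] v0 by blast
  have "det (cols3 v (\<delta> *v v) (\<gamma> *v v)) \<noteq> 0" using d det_cols_bil by simp
  thus ?thesis using that g(1) d(1) vv nw h1' by blast
qed

lemma herm_F: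
  assumes "hadj F ** F = mat d" "cnj d = d"
  shows "herm (F *v x) (F *v y) = d * herm x y"
proof -
  have "herm (F *v x) (F *v y) = herm x ((hadj F ** F) *v y)" by (simp add: herm_hadj matrix_vector_mul_assoc)
  also have "(hadj F ** F) *v y = d *s y" unfolding assms(1) by (simp add: vec_eq3 mv3 mat_def)
  finally show ?thesis using assms(2) by (simp add: herm_scale_right)
qed

lemma key_c:
  assumes pG: "p \<in> \<Gamma>" and par: "parabolic p"
  obtains c f1 where "c \<noteq> 0" "null_vec f1" "\<forall>g\<in>\<Gamma>. c * herm (g *v f1) f1 \<in> trace_field \<Gamma>"
proof -
  let ?K = "trace_field \<Gamma>"
  have Ksf: "is_subfield ?K" by (rule trace_field_subfield)
  obtain v where nv: "null_vec v" and fv: "fixes_pt p v" using par unfolding parabolic_def by blast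
  obtain l where pv: "p *v v = l *s v" using fv unfolding fixes_pt_def by blast
  have noneg: "\<not> (\<exists>z. negative_vec z \<and> fixes_pt p z)" using par unfolding parabolic_def by blast
  have uq: "\<And>w. null_vec w \<Longrightarrow> fixes_pt p w \<Longrightarrow> \<exists>c. w = c *s v"
    using par nv fv unfolding parabolic_def by blast
  obtain \<gamma> \<delta> where gd: "\<gamma> \<in> \<Gamma>" "\<delta> \<in> \<Gamma>" and fh: "herm v v = 0" "herm (\<gamma> *v v) (\<gamma> *v v) = 0"
    "herm v (\<gamma> *v v) \<noteq> 0" "det (cols3 v (\<delta> *v v) (\<gamma> *v v)) \<noteq> 0"
    using get_frame[OF nv] by blast
  define w where "w = \<gamma> *v v"
  define x where "x = \<delta> *v v"
  define \<alpha> where "\<alpha> = herm x w / herm v w"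
  define \<beta> where "\<beta> = herm x v / herm w v"
  define f2 where "f2 = x - \<alpha> *s v - \<beta> *s w"
  define d where "d = herm f2 f2"
  define \<kappa> where "\<kappa> = d / herm v w"
  define F where "F = cols3 (\<kappa> *s v) f2 w"
  note fr = frame[of v w x, OF fh[folded w_def x_def], folded \<alpha>_def \<beta>_def, folded f2_def, folded d_def,
     folded \<kappa>_def, folded F_def]
  define Fi where "Fi = cmul (1/d) (hadj F)"
  have G: "hadj F ** F = mat d" using fr(1) .
  have FFi: "F ** Fi = mat 1" using fr(2) unfolding Fi_def .
  have FiF: "Fi ** F = mat 1" using fr(3) unfolding Fi_def .
  have dpos: "Re d > 0" using fr(4) .
  have dre: "d = complex_of_real (Re d)" using fr(5) .
  have k0: "\<kappa> \<noteq> 0" using fr(6) .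
  have d0: "d \<noteq> 0" using dpos by auto
  have dim: "Im d = 0" using dre by (metis Im_complex_of_real)
  have dr: "cnj d = d" using dre by (metis Reals_cnj_iff Reals_of_real)
  have hF: "herm (F *v a) (F *v b) = d * herm a b" for a b using herm_F[OF G dr] .
  have hFi: "herm a b = d * herm (Fi *v a) (Fi *v b)" for a b
    using hF[of "Fi *v a" "Fi *v b"] by (simp add: matrix_vector_mul_assoc FFi)
  define P where "P = Fi ** p ** F"
  have pSU: "p \<in> SU21" using G_SU[OF sg pG] .
  have ppres: "herm (p *v a) (p *v b) = herm a b" for a b using G_pres'[OF sg pG] .
  have "herm (P *v a) (P *v b) = herm a b" for a b
  proof -
    have "d * herm (P *v a) (P *v b) = herm (p *v (F *v a)) (p *v (F *v b))"
      using hFi[of "p *v (F *v a)" "p *v (F *v b)"] by (simp add: P_def matrix_vector_mul_assoc matrix_mul_assoc)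
    also have "\<dots> = d * herm a b" by (simp add: ppres hF)
    finally show ?thesis using d0 by simp
  qed
  hence Ppres: "hadj P ** P = mat 1" using pres_iff unfolding pres_def by blast
  have "det Fi * det F = 1" using FiF by (metis det_I det_mul)
  hence Pdet: "det P = 1" using pSU unfolding P_def SU21_def by (simp add: det_mul)
  have FP: "F ** P = p ** F"
  proof -
    have "F ** P = (F ** Fi) ** p ** F" by (simp add: P_def matrix_mul_assoc)
    thus ?thesis by (simp add: FFi)
  qed
  have col1F: "col F 1 = \<kappa> *s v" by (simp add: F_def)
  have FiFcol: "Fi *v col F 1 = vec3 1 0 0"
    using col_mult[of Fi F 1] FiF by (simp add: vec_eq3 mat_def)
  have Fiv: "Fi *v v = (1/\<kappa>) *s vec3 1 0 0"
    using FiFcol k0 unfolding col1F mv_scale by (simp add: vec_eq3 field_simps)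
  have colP: "col P 1 = l *s vec3 1 0 0"
  proof -
    have "col P 1 = Fi *v (p *v (\<kappa> *s v))" by (simp add: P_def col_mult col1F matrix_vector_mul_assoc)
    also have "\<dots> = l *s vec3 1 0 0" using k0 by (simp add: mv_scale pv Fiv vec_eq3)
    finally show ?thesis .
  qed
  have Pe: "P$1$1 = l" "P$2$1 = 0" "P$3$1 = 0"
    using colP by (simp_all add: vec_eq3 flip: col_nth)
  have Ffix: "fixes_pt p (F *v y)" if fy: "fixes_pt P y" for y
  proof -
    obtain m where m: "P *v y = m *s y" and y0: "y \<noteq> 0" using fy unfolding fixes_pt_def by blast
    have "p *v (F *v y) = m *s (F *v y)"
      by (metis FP m matrix_vector_mul_assoc mv_scale)
    moreover have "F *v y \<noteq> 0" using y0 FiF by (metis matrix_vector_mul_assoc matrix_vector_mul_lid matrix_vector_mult_0_right)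
    ultimately show ?thesis by (auto simp: fixes_pt_def)
  qed
  have noneg': "\<not> (\<exists>y. negative_vec y \<and> fixes_pt P y)"
  proof
    assume "\<exists>y. negative_vec y \<and> fixes_pt P y"
    then obtain y where y: "negative_vec y" "fixes_pt P y" by blast
    have "negative_vec (F *v y)" using y(1) dpos hF[of y y] dre unfolding negative_vec_def
      by (simp add: mult_pos_neg dim)
    thus False using noneg Ffix y(2) by blast
  qed
  have uniq': "\<forall>y. null_vec y \<and> fixes_pt P y \<longrightarrow> y$2 = 0 \<and> y$3 = 0"
  proof (intro allI impI)
    fix y assume y: "null_vec y \<and> fixes_pt P y"
    have "F *v y \<noteq> 0" using Ffix y unfolding fixes_pt_def by blast
    moreover have "herm (F *v y) (F *v y) = 0" using y hF[of y y] unfolding null_vec_def by simp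
    ultimately have "null_vec (F *v y)" unfolding null_vec_def by blast
    then obtain c' where c': "F *v y = c' *s v" using uq Ffix y by blast
    have "y = Fi *v (F *v y)" by (simp add: matrix_vector_mul_assoc FiF)
    also have "\<dots> = (c' / \<kappa>) *s vec3 1 0 0" unfolding c' mv_scale Fiv by (simp add: vec_eq3)
    finally show "y$2 = 0 \<and> y$3 = 0" by (metis vec3_nth(2,3) mult_zero_right vector_smult_component)
  qed
  have trP: "trace P = trace p"
  proof -
    have "trace P = trace ((Fi ** p) ** F)" unfolding P_def ..
    also have "\<dots> = trace (F ** (Fi ** p))" by (rule trace_mul_sym)
    finally have "trace P = trace (F ** (Fi ** p))" .
    thus ?thesis by (simp add: matrix_mul_assoc FFi)
  qed
  have trK: "trace P \<in> ?K" unfolding trP using pG trace_in_field by blast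
  have ctrK: "cnj (trace P) \<in> ?K" unfolding trP using TF_cnj[OF sg] pG trace_in_field by blast
  obtain a0 a1 a2 e where e0: "e \<noteq> 0" and
    hK: "\<forall>K. is_subfield K \<longrightarrow> trace P \<in> K \<longrightarrow> cnj (trace P) \<in> K \<longrightarrow> a0 \<in> K \<and> a1 \<in> K \<and> a2 \<in> K"
    and E: "mat a0 + cmul a1 P + cmul a2 (P ** P) = m3 0 0 e 0 0 0 0 0 0"
    using para_analysis[OF Ppres Pdet Pe noneg' uniq'] by (elim exE conjE)
  have aK: "a0 \<in> ?K" "a1 \<in> ?K" "a2 \<in> ?K" using hK Ksf trK ctrK by auto
  have FPFi: "F ** P ** Fi = p"
  proof -
    have "F ** P ** Fi = (F ** Fi) ** p ** (F ** Fi)" by (simp add: P_def matrix_mul_assoc)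
    thus ?thesis by (simp add: FFi)
  qed
  have FPPFi: "F ** (P ** P) ** Fi = p ** p"
  proof -
    have "(F ** P ** Fi) ** (F ** P ** Fi) = F ** P ** (Fi ** F) ** P ** Fi" by (simp add: matrix_mul_assoc)
    thus ?thesis by (simp add: FiF FPFi matrix_mul_assoc)
  qed
  have cmat: "F ** mat a ** Fi = mat a" for a
  proof -
    have "F ** mat a ** Fi = F ** cmul a (mat 1) ** Fi" by (simp flip: mat_cmul)
    also have "\<dots> = cmul a (F ** Fi)" by (simp add: cmul_mult_left cmul_mult_right)
    finally show ?thesis by (simp add: FFi flip: mat_cmul)
  qed
  have ccm: "F ** cmul a M ** Fi = cmul a (F ** M ** Fi)" for a M
    by (simp add: cmul_mult_left cmul_mult_right)
  define S where "S = mat a0 + cmul a1 p + cmul a2 (p ** p)"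
  define Em where "Em = m3 0 0 e 0 0 0 0 0 0"
  have SE: "S = F ** Em ** Fi"
    unfolding Em_def E[symmetric] S_def by (simp add: matrix_add_ldistrib mat_add_rdistrib cmat ccm FPFi FPPFi)
  have key: "(e / d) * herm (g *v col F 1) (col F 1) \<in> ?K" if gG: "g \<in> \<Gamma>" for g
  proof -
    have "S ** g = cmul a0 g + cmul a1 (p ** g) + cmul a2 (p ** p ** g)"
      unfolding S_def by (simp add: mat_add_rdistrib cmul_mult_left mat_cmul[of a0])
    hence "trace (S ** g) = a0 * trace g + a1 * trace (p ** g) + a2 * trace (p ** p ** g)"
      by (simp add: trace_add trace_cmul)
    moreover have "p ** g \<in> \<Gamma>" "p ** p ** g \<in> \<Gamma>" using G_mult[OF sg] pG gG by auto
    ultimately have tK: "trace (S ** g) \<in> ?K" using aK gG trace_in_field Ksf by (simp add: sf_intros)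
    have "trace (S ** g) = trace (F ** (Em ** Fi ** g))" unfolding SE by (simp add: matrix_mul_assoc)
    also have "\<dots> = trace ((Em ** Fi ** g) ** F)" by (rule trace_mul_sym)
    also have "\<dots> = trace (Em ** (Fi ** g ** F))" by (simp add: matrix_mul_assoc)
    also have "\<dots> = e * (Fi ** g ** F)$3$1" unfolding Em_def by (rule trace_E)
    also have "(Fi ** g ** F)$3$1 = (Fi *v (g *v col F 1))$3"
      by (metis col_mult col_nth matrix_mul_assoc)
    also have "\<dots> = (1/d) * herm (g *v col F 1) (col F 1)"
      unfolding Fi_def cmul_mv by (simp add: hadj_mv_nth)
    finally show ?thesis using tK by simp
  qed
  have f1: "null_vec (col F 1)"
    using fh(1) k0 nv unfolding col1F null_vec_def by (auto simp: herm_lin vec_eq_iff)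
  show ?thesis using that[of "e/d" "col F 1"] e0 d0 f1 key by auto
qed

end

context
  fixes \<Gamma> :: "cmat set"
  assumes sg: "is_subgroup_SU21 \<Gamma>" and zd: "zariski_dense_SU21 \<Gamma>"
begin

lemma final:
  assumes c0: "c \<noteq> 0" and nf: "null_vec f1" and cK: "\<forall>g\<in>\<Gamma>. c * herm (g *v f1) f1 \<in> trace_field \<Gamma>"
  shows "\<exists>h\<in>SU21. \<forall>g\<in>\<Gamma>. \<forall>i j. (h ** g ** matrix_inv h)$i$j \<in> trace_field \<Gamma>"
proof -
  let ?K = "trace_field \<Gamma>"
  have Ksf: "is_subfield ?K" by (rule trace_field_subfield)
  define V where "V = {x. \<forall>g\<in>\<Gamma>. c * herm (g *v x) f1 \<in> ?K}"
  define W where "W = {y. \<forall>x\<in>V. c * herm x y \<in> ?K}"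
  have f1V: "f1 \<in> V" using cK V_def by blast
  have VG: "g *v x \<in> V" if "g \<in> \<Gamma>" "x \<in> V" for g x
    using that G_mult[OF sg] unfolding V_def by (simp add: matrix_vector_mul_assoc)
  have Vadd: "x + y \<in> V" if "x \<in> V" "y \<in> V" for x y
    using that Ksf unfolding V_def by (simp add: matrix_vector_right_distrib herm_lin distrib_left sf_intros)
  have Vdiff: "x - y \<in> V" if "x \<in> V" "y \<in> V" for x y
    using that Ksf unfolding V_def by (simp add: matrix_vector_mult_diff_distrib herm_lin right_diff_distrib sf_intros)
  have Vscale: "k *s x \<in> V" if "k \<in> ?K" "x \<in> V" for k x
  proof -
    have eq: "c * herm (g *v (k *s x)) f1 = k * (c * herm (g *v x) f1)" for g
      by (simp add: mv_scale herm_lin)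
    show ?thesis unfolding V_def
    proof (intro CollectI ballI)
      fix g assume "g \<in> \<Gamma>"
      thus "c * herm (g *v (k *s x)) f1 \<in> ?K" unfolding eq using that Ksf V_def by (auto intro: sf_mult)
    qed
  qed
  have WG: "g *v f1 \<in> W" if "g \<in> \<Gamma>" for g
  proof -
    have "c * herm x (g *v f1) \<in> ?K" if "x \<in> V" for x
      using that G_hadj[OF sg \<open>g \<in> \<Gamma>\<close>] unfolding V_def herm_hadj' by blast
    thus ?thesis unfolding W_def by blast
  qed
  have f1W: "f1 \<in> W" using WG[OF G_one[OF sg]] by simp
  have Wadd: "x + y \<in> W" if "x \<in> W" "y \<in> W" for x y
    using that Ksf unfolding W_def by (simp add: herm_lin distrib_left sf_intros)
  have Wdiff: "x - y \<in> W" if "x \<in> W" "y \<in> W" for x y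
    using that Ksf unfolding W_def by (simp add: herm_lin right_diff_distrib sf_intros)
  have Wscale: "k *s x \<in> W" if "k \<in> ?K" "x \<in> W" for k x
  proof -
    have ck: "cnj k \<in> ?K" using TF_cnj[OF sg] that by blast
    have eq: "c * herm y (k *s x) = cnj k * (c * herm y x)" for y by (simp add: herm_lin)
    show ?thesis unfolding W_def
    proof (intro CollectI ballI)
      fix y assume "y \<in> V"
      thus "c * herm y (k *s x) \<in> ?K" unfolding eq using that ck Ksf W_def by (auto intro: sf_mult)
    qed
  qed
  have ratio: "herm x y / herm x' y' \<in> ?K" if "x \<in> V" "y \<in> W" "x' \<in> V" "y' \<in> W" for x y x' y'
  proof -
    have eq: "herm x y / herm x' y' = (c * herm x y) / (c * herm x' y')" using c0 by simp
    have "c * herm x y \<in> ?K" "c * herm x' y' \<in> ?K" using that unfolding W_def by auto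
    thus ?thesis unfolding eq using Ksf by (intro sf_divide)
  qed
  obtain \<gamma> \<delta> where gd: "\<gamma> \<in> \<Gamma>" "\<delta> \<in> \<Gamma>" and fh: "herm f1 f1 = 0" "herm (\<gamma> *v f1) (\<gamma> *v f1) = 0"
    "herm f1 (\<gamma> *v f1) \<noteq> 0" "det (cols3 f1 (\<delta> *v f1) (\<gamma> *v f1)) \<noteq> 0"
    using get_frame[OF sg zd nf] by blast
  define w where "w = \<gamma> *v f1"
  define x where "x = \<delta> *v f1"
  define \<alpha> where "\<alpha> = herm x w / herm f1 w"
  define \<beta> where "\<beta> = herm x f1 / herm w f1"
  define f2 where "f2 = x - \<alpha> *s f1 - \<beta> *s w"
  define d where "d = herm f2 f2"
  define \<kappa> where "\<kappa> = d / herm f1 w"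
  define F where "F = cols3 (\<kappa> *s f1) f2 w"
  note fr = frame[of f1 w x, OF fh[folded w_def x_def], folded \<alpha>_def \<beta>_def, folded f2_def, folded d_def,
     folded \<kappa>_def, folded F_def]
  define Fi where "Fi = cmul (1/d) (hadj F)"
  have G: "hadj F ** F = mat d" using fr(1) .
  have FFi: "F ** Fi = mat 1" using fr(2) unfolding Fi_def .
  have FiF: "Fi ** F = mat 1" using fr(3) unfolding Fi_def .
  have dpos: "Re d > 0" using fr(4) .
  have dre: "d = complex_of_real (Re d)" using fr(5) .
  have d0: "d \<noteq> 0" using dpos by auto
  have hw0: "herm f1 w \<noteq> 0" using fh(3) w_def by simp
  have hw0': "herm w f1 \<noteq> 0" using hw0 by (metis complex_cnj_zero herm_sym)
  have wV: "w \<in> V" "w \<in> W" using VG WG gd f1V unfolding w_def by auto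
  have xV: "x \<in> V" "x \<in> W" using VG WG gd f1V unfolding x_def by auto
  have aK: "\<alpha> \<in> ?K" unfolding \<alpha>_def using ratio xV wV f1V by blast
  have bK: "\<beta> \<in> ?K" unfolding \<beta>_def using ratio xV wV f1V f1W by blast
  have f2V: "f2 \<in> V" "f2 \<in> W" unfolding f2_def using aK bK xV wV f1V f1W Vdiff Vscale Wdiff Wscale by auto
  have kK: "\<kappa> \<in> ?K" unfolding \<kappa>_def d_def using ratio f2V f1V wV by blast
  have colV: "col F k \<in> V \<and> col F k \<in> W" for k
  proof -
    have "k = 1 \<or> k = 2 \<or> k = 3" using exhaust_3 by blast
    thus ?thesis using kK f1V f1W f2V wV Vscale Wscale unfolding F_def by auto
  qed
  have entries: "(Fi ** g ** F)$i$j \<in> ?K" if gG: "g \<in> \<Gamma>" for g i j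
  proof -
    have "(Fi ** g ** F)$i$j = (Fi *v (g *v col F j))$i"
      by (metis col_mult col_nth matrix_mul_assoc)
    also have "\<dots> = herm (g *v col F j) (col F (rv i)) / herm f2 f2"
      unfolding Fi_def cmul_mv by (simp add: hadj_mv_nth d_def)
    finally show ?thesis using ratio VG[OF gG] colV f2V by auto
  qed
  define D where "D = det F"
  have "det Fi * det F = 1" using FiF by (metis det_I det_mul)
  hence D0: "D \<noteq> 0" unfolding D_def by auto
  have dFi: "det Fi = 1 / D" using \<open>det Fi * det F = 1\<close> D0 unfolding D_def by (simp add: eq_divide_eq)
  have "cnj D * D = d^3" using arg_cong[OF G, of det] unfolding D_def by (simp add: det_mul det_hadj det_mat3)
  hence cD: "(cmod D)^2 = (Re d)^3"
    by (metis (no_types, lifting) Re_complex_of_real complex_norm_square dre mult.commute of_real_power)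
  define s where "s = exp (Ln D / 3)"
  have s3: "s^3 = D" unfolding s_def using D0 by (simp add: exp_of_nat_mult[symmetric] exp_Ln)
  have s0: "s \<noteq> 0" unfolding s_def by simp
  have "((cmod s)^2)^3 = (Re d)^3" using s3 cD by (metis norm_power power_mult mult.commute)
  hence ms: "(cmod s)^2 = Re d" by (rule power_eq_imp_eq_base) (use dpos in auto)
  have ssd: "cnj s * s = d"
    by (metis complex_norm_square dre ms mult.commute)
  define h where "h = cmul s Fi"
  define hi where "hi = cmul (1/s) F"
  have hhi: "h ** hi = mat 1" unfolding h_def hi_def using s0
    by (simp add: cmul_mult_left cmul_mult_right cmul_cmul FiF cmul_one)
  have mih: "matrix_inv h = hi" using matrix_inv_eq[OF hhi] .
  have hadjFi: "hadj Fi = cmul (1/d) F" unfolding Fi_def using dre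
    by (simp add: hadj_cmul) (metis Reals_cnj_iff Reals_of_real complex_cnj_divide complex_cnj_one)
  have "hadj h ** h = cmul (cnj s * (1/d) * s) (F ** Fi)"
    unfolding h_def hadj_cmul hadjFi by (simp add: cmul_mult_left cmul_mult_right cmul_cmul algebra_simps)
  also have "\<dots> = mat 1" using ssd d0 by (simp add: FFi cmul_mat field_simps)
  finally have hp: "hadj h ** h = mat 1" .
  have hd: "det h = 1" unfolding h_def det_cmul s3 dFi using D0 by simp
  have hSU: "h \<in> SU21" using SU21_iff hp hd by blast
  have conj: "h ** g ** matrix_inv h = Fi ** g ** F" for g
    unfolding mih unfolding h_def hi_def using s0 by (simp add: cmul_mult_left cmul_mult_right cmul_cmul cmul_one)
  show ?thesis using hSU conj entries by (intro bexI[of _ h]) auto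
qed

end

theorem mainTheorem1:
  fixes \<Gamma> :: "cmat set"
  assumes "is_subgroup_SU21 \<Gamma>"
    and "\<exists>g\<in>\<Gamma>. parabolic g"
    and "zariski_dense_SU21 \<Gamma>"
  shows "\<exists>h\<in>SU21. \<forall>g\<in>\<Gamma>. \<forall>i j. (h ** g ** matrix_inv h) $ i $ j \<in> trace_field \<Gamma>"
proof -
  obtain p where "p \<in> \<Gamma>" "parabolic p" using assms(2) by blast
  then obtain c f1 where "c \<noteq> 0" "null_vec f1" "\<forall>g\<in>\<Gamma>. c * herm (g *v f1) f1 \<in> trace_field \<Gamma>"
    using key_c[OF assms(1) assms(3)] by blast
  thus ?thesis using final[OF assms(1) assms(3)] by blast
qed

end
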